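(* Assume the standing assumptions and additionally that every $\sigma_l$ is differentiable everywhere, and let $\Omega=\Omega_{in}$ with $\lambda>0$, $1\le p<\infty$. Then for every $B\in\mathbb{R}$, the set of dimension tuples $\mathbf{d}=(d_1,\dots,d_{L-1})$ for which there exists a proper $B$-local minimum $(\mathbf{d},\mathbf{W})$ of $E$ is bounded.
   Context: Network: for dimensions $d_0,\dots,d_L$ and weights $\mathbf{W}=(W_1,\dots,W_L)$, $W_l\in\mathbb{R}^{d_{l-1}\times d_l}$, define for a row vector $x\in\mathbb{R}^{d_0}$: $x_0=x$, $z_l=x_{l-1}W_l$, $x_l=\sigma_l.(z_l)$ (elementwise), $f(\mathbf{W},x)=x_L$; $d_0,d_L$ are fixed and $d_1,\dots,d_{L-1}$ vary. $E(\mathbf{d},\mathbf{W})=\frac{1}{|D|}\sum_{(x,y)\in D}e(f(\mathbf{W},x),y)+\Omega(\mathbf{W},\lambda,p)$ with $D$ a finite dataset of pairs $(x,y)$, $x\in\mathbb{R}^{d_0}$, $y\in Y$. $\Omega_{in}(\mathbf{W},\lambda,p)=\lambda\sum_{l=1}^L\sum_{j=1}^{d_l}\|(W_l(i,j))_{i}\|_p$, $\Omega_{out}(\mathbf{W},\lambda,p)=\lambda\sum_{l=1}^L\sum_{i=1}^{d_{l-1}}\|(W_l(i,j))_{j}\|_p$. Standing assumptions: each $\sigma_l$ is left- and right-differentiable everywhere, and there are functions $b_{1,l},b_{2,l}:\mathbb{R}_{\ge0}\to\mathbb{R}_{\ge0}$ with $|\sigma_l(s)|\le b_{1,l}(S)|s|$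 and $|\sigma_l^{\leftarrow}(s)|,|\sigma_l^{\rightarrow}(s)|\le b_{2,l}(S)$ whenever $|s|\le S$; $e$ is nonnegative, differentiable in its first argument, and there is $b_3$ with $e(v,y)\le S\Rightarrow\|\partial e(v,y)/\partial v\|_\infty\le b_3(S)$. Definitions: The fan-in of hidden unit $j$ in layer $l$ ($1\le l\le L-1$) is column $j$ of $W_l$; its fan-out is row $j$ of $W_{l+1}$. A pair $(\mathbf{d},\mathbf{W})$ is a local minimum of $E$ if $\mathbf{W}$ is a local minimum of $E(\mathbf{d},\cdot)$ with $\mathbf{d}$ fixed; it is $B$-locally minimal if moreover $E(\mathbf{d},\mathbf{W})\le B$. The proper dimensionality of $\mathbf{W}$ is the dimension tuple obtained by deleting all hidden units whose fan-in or fan-out (or both) is the zero vector; $(\mathbf{d},\mathbf{W})$ is proper if $\mathbf{d}$ equals the proper dimensionality of $\mathbf{W}$ (i.e. no hidden unit has zero fan-in or zero fan-out). A proper $B$-local minimum is a $B$-locally minimal local minimum that is proper. *)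

theory Defs
  imports "HOL-Analysis.Analysis"
begin

text \<open>Fixed enumeration of a finite index type by {0..<CARD('a)}; used to identify
  the fixed input/output spaces real^'i, real^'o with R^{d_0}, R^{d_L}.\<close>
definition fin_enum :: "nat \<Rightarrow> 'a::finite" where
  "fin_enum = (SOME g. bij_betw g {..<CARD('a)} (UNIV :: 'a set))"

text \<open>Hidden layer vectors: nat-indexed, layer l has components 0..<d l.
  Weights: W l i j is entry (i,j) of W_l (i < d (l-1), j < d l).\<close>
fun layer :: "(nat \<Rightarrow> real \<Rightarrow> real) \<Rightarrow> (nat \<Rightarrow> nat) \<Rightarrow> (nat \<Rightarrow> nat \<Rightarrow> nat \<Rightarrow> real)
              \<Rightarrow> real ^ 'i::finite \<Rightarrow> nat \<Rightarrow> nat \<Rightarrow> real" where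
  "layer \<sigma> d W x 0 = (\<lambda>i. x $ fin_enum i)"
| "layer \<sigma> d W x (Suc l) =
     (\<lambda>j. \<sigma> (Suc l) (\<Sum>i<d l. layer \<sigma> d W x l i * W (Suc l) i j))"

definition net :: "nat \<Rightarrow> (nat \<Rightarrow> real \<Rightarrow> real) \<Rightarrow> (nat \<Rightarrow> nat) \<Rightarrow> (nat \<Rightarrow> nat \<Rightarrow> nat \<Rightarrow> real)
              \<Rightarrow> real ^ 'i::finite \<Rightarrow> real ^ 'o::finite" where
  "net L \<sigma> d W x =
     (\<chi> k. layer \<sigma> d W x L (inv_into {..<CARD('o)} fin_enum k))"

definition Omega_in :: "nat \<Rightarrow> (nat \<Rightarrow> nat) \<Rightarrow> (nat \<Rightarrow> nat \<Rightarrow> nat \<Rightarrow> real) \<Rightarrow> real \<Rightarrow> real \<Rightarrow> real" where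
  "Omega_in L d W lam p =
     lam * (\<Sum>l\<in>{1..L}. \<Sum>j<d l. (\<Sum>i<d (l - 1). \<bar>W l i j\<bar> powr p) powr (1 / p))"

definition E_err :: "nat \<Rightarrow> (nat \<Rightarrow> real \<Rightarrow> real) \<Rightarrow> (real ^ 'o::finite \<Rightarrow> 'y \<Rightarrow> real)
     \<Rightarrow> ((real ^ 'i::finite) \<times> 'y) set \<Rightarrow> real \<Rightarrow> real
     \<Rightarrow> (nat \<Rightarrow> nat) \<Rightarrow> (nat \<Rightarrow> nat \<Rightarrow> nat \<Rightarrow> real) \<Rightarrow> real" where
  "E_err L \<sigma> e D lam p d W =
     (\<Sum>(x, y)\<in>D. e (net L \<sigma> d W x) y) / real (card D) + Omega_in L d W lam p"

text \<open>W is a local minimum of E(d, .) over the weight space of shape d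
  (the max-norm neighbourhood on the finitely many relevant entries).\<close>
definition local_min :: "nat \<Rightarrow> (nat \<Rightarrow> nat) \<Rightarrow> ((nat \<Rightarrow> nat \<Rightarrow> nat \<Rightarrow> real) \<Rightarrow> real)
     \<Rightarrow> (nat \<Rightarrow> nat \<Rightarrow> nat \<Rightarrow> real) \<Rightarrow> bool" where
  "local_min L d F W \<longleftrightarrow>
     (\<exists>\<epsilon>>0. \<forall>W'. (\<forall>l\<in>{1..L}. \<forall>i<d (l - 1). \<forall>j<d l. \<bar>W' l i j - W l i j\<bar> < \<epsilon>)
                  \<longrightarrow> F W \<le> F W')"

text \<open>Proper: no hidden unit has zero fan-in (column j of W_l) or zero fan-out (row j of W_(l+1)).\<close>
definition proper :: "nat \<Rightarrow> (nat \<Rightarrow> nat) \<Rightarrow> (nat \<Rightarrow> nat \<Rightarrow> nat \<Rightarrow> real) \<Rightarrow> bool" where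
  "proper L d W \<longleftrightarrow>
     (\<forall>l\<in>{1..L-1}. \<forall>j<d l. (\<exists>i<d (l - 1). W l i j \<noteq> 0) \<and> (\<exists>k<d (l + 1). W (l + 1) j k \<noteq> 0))"

end

theory Submission
  imports Defs
begin

definition pn :: "real \<Rightarrow> nat \<Rightarrow> (nat \<Rightarrow> real) \<Rightarrow> real" where
  "pn p n u = (\<Sum>i<n. \<bar>u i\<bar> powr p) powr (1/p)"

lemma pn_nonneg: "0 \<le> pn p n u"
  by (simp add: pn_def)

lemma powr_inv_cancel: assumes "(p::real) > 0" "0 \<le> a" shows "(a powr p) powr (1/p) = a"
proof -
  have "p * (1/p) = 1" using assms by simp
  then show ?thesis using assms by (simp only: powr_powr) simp
qed

lemma powr_inv_cancel2: assumes "(p::real) > 0" "0 \<le> a" shows "(a powr (1/p)) powr p = a"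
proof -
  have "(1/p) * p = 1" using assms by simp
  then show ?thesis using assms by (simp only: powr_powr) simp
qed

lemma pn_ge: assumes "p > 0" "i < n" shows "\<bar>u i\<bar> \<le> pn p n u"
proof -
  have "\<bar>u i\<bar> = (\<bar>u i\<bar> powr p) powr (1/p)" using powr_inv_cancel[OF assms(1)] by simp
  also have "\<dots> \<le> (\<Sum>i<n. \<bar>u i\<bar> powr p) powr (1/p)"
    apply (rule powr_mono2)
    using assms by (auto intro!: member_le_sum)
  finally show ?thesis by (simp add: pn_def)
qed

lemma pn_pow: assumes "p > 0" shows "pn p n u powr p = (\<Sum>i<n. \<bar>u i\<bar> powr p)"
  unfolding pn_def by (rule powr_inv_cancel2[OF assms]) (simp add: sum_nonneg)

lemma pn_scale: assumes "p > 0" "0 \<le> c" shows "pn p n (\<lambda>i. c * u i) = c * pn p n u"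
proof -
  have "(\<Sum>i<n. \<bar>c * u i\<bar> powr p) = c powr p * (\<Sum>i<n. \<bar>u i\<bar> powr p)"
    using assms by (simp add: abs_mult powr_mult sum_distrib_left)
  then show ?thesis using assms
    by (simp add: pn_def powr_mult sum_nonneg powr_inv_cancel)
qed

lemma layer_Suc_z: "layer \<sigma> d W x (Suc m) j = \<sigma> (Suc m) (\<Sum>i<d m. layer \<sigma> d W x m i * W (Suc m) i j)"
  by simp

definition Wt :: "(nat \<Rightarrow> nat \<Rightarrow> nat \<Rightarrow> real) \<Rightarrow> nat \<Rightarrow> nat \<Rightarrow> real \<Rightarrow> nat \<Rightarrow> nat \<Rightarrow> nat \<Rightarrow> real" where
  "Wt W l j t = W(l := (\<lambda>i k. if k = j then (1-t) * W l i k else W l i k))"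

lemma Wt_other: "m \<noteq> l \<Longrightarrow> Wt W l j t m = W m"
  by (simp add: Wt_def)

lemma layer_Wt_below: "m < l \<Longrightarrow> layer \<sigma> d (Wt W l j t) x m = layer \<sigma> d W x m"
proof (induction m)
  case 0 then show ?case by simp
next
  case (Suc m) then show ?case by (simp add: Wt_other del: layer.simps add: layer_Suc_z)
qed

lemma layer_Wt_at:
  "layer \<sigma> d (Wt W (Suc l) j t) x (Suc l) k =
     (if k = j then \<sigma> (Suc l) ((1-t) * (\<Sum>i<d l. layer \<sigma> d W x l i * W (Suc l) i j))
      else layer \<sigma> d W x (Suc l) k)"
proof -
  have h: "layer \<sigma> d (Wt W (Suc l) j t) x l = layer \<sigma> d W x l" by (rule layer_Wt_below) simp
  show ?thesis
    apply (simp only: layer_Suc_z h)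
    apply (simp add: Wt_def sum_distrib_left mult_ac del: layer.simps)
    done
qed

lemma pn_Wt:
  assumes "0 < p" "0 \<le> t" "t \<le> 1"
  shows "pn p n (\<lambda>i. Wt W l j t l' i k) = pn p n (\<lambda>i. W l' i k) - (if l' = l \<and> k = j then t * pn p n (\<lambda>i. W l i j) else 0)"
proof (cases "l' = l \<and> k = j")
  case True
  then have "pn p n (\<lambda>i. Wt W l j t l' i k) = pn p n (\<lambda>i. (1-t) * W l i j)" by (simp add: Wt_def)
  also have "\<dots> = (1-t) * pn p n (\<lambda>i. W l i j)" using assms by (simp add: pn_scale)
  finally show ?thesis using True by (simp add: algebra_simps)
next
  case False
  then show ?thesis by (auto simp: Wt_def)
qed

lemma Omega_pn: "Omega_in L d V lam p = lam * (\<Sum>l'\<in>{1..L}. \<Sum>k<d l'. pn p (d (l'-1)) (\<lambda>i. V l' i k))"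
  by (simp add: Omega_in_def pn_def)

lemma Omega_Wt:
  assumes "0 < p" "0 \<le> t" "t \<le> 1" "l \<in> {1..L}" "j < d l"
  shows "Omega_in L d (Wt W l j t) lam p = Omega_in L d W lam p - lam * (t * pn p (d (l-1)) (\<lambda>i. W l i j))"
proof -
  have dd: "(\<Sum>l'\<in>{1..L}. \<Sum>k<d l'. (if l' = l \<and> k = j then c l' else 0)) = (c l::real)" for c
  proof -
    have "(\<Sum>k<d l'. (if l' = l \<and> k = j then c l' else 0)) = (if l' = l then c l' else 0)" for l'
      using assms by (cases "l' = l") auto
    then show ?thesis using assms by simp
  qed
  show ?thesis
    unfolding Omega_pn pn_Wt[OF assms(1-3)] sum_subtractf
    by (simp only: dd[of "\<lambda>l'. t * pn p (d (l' - 1)) (\<lambda>i. W l i j)"]) (simp add: right_diff_distrib)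
qed

lemma fin_enum_bij: "bij_betw (fin_enum :: nat \<Rightarrow> 'a::finite) {..<CARD('a)} UNIV"
proof -
  have "\<exists>g. bij_betw g {..<CARD('a)} (UNIV :: 'a set)"
    using ex_bij_betw_nat_finite[of "UNIV :: 'a set"] by (simp add: atLeast0LessThan)
  then show ?thesis unfolding fin_enum_def by (rule someI_ex)
qed

lemma fin_enum_inv: "inv_into {..<CARD('a)} (fin_enum :: nat \<Rightarrow> 'a::finite) k < CARD('a)"
proof -
  have "k \<in> (fin_enum :: nat \<Rightarrow> 'a) ` {..<CARD('a)}" using fin_enum_bij[where 'a='a]
    by (simp add: bij_betw_def)
  from inv_into_into[OF this] show ?thesis by simp
qed

lemma avg_diff:
  fixes f g :: "'a \<Rightarrow> real"
  assumes "finite A" "\<forall>a\<in>A. f a - g a \<le> c" "0 \<le> c"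
  shows "sum f A / real (card A) - sum g A / real (card A) \<le> c"
proof (cases "card A = 0")
  case True then show ?thesis using assms by simp
next
  case False
  have "sum f A / real (card A) - sum g A / real (card A) = (\<Sum>a\<in>A. f a - g a) / real (card A)"
    by (simp add: sum_subtractf diff_divide_distrib)
  also have "\<dots> \<le> (\<Sum>a\<in>A. c) / real (card A)"
    using assms by (intro divide_right_mono sum_mono) auto
  also have "\<dots> = c" using False by simp
  finally show ?thesis .
qed

locale NN =
  fixes L :: nat and \<sigma> :: "nat \<Rightarrow> real \<Rightarrow> real"
    and e :: "real ^ 'o::finite \<Rightarrow> 'y \<Rightarrow> real"
    and D :: "((real ^ 'i::finite) \<times> 'y) set"
    and lam p B :: real and b1 b2 :: "nat \<Rightarrow> real \<Rightarrow> real" and b3 :: "real \<Rightarrow> real"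
  assumes L: "1 \<le> L"
    and D: "finite D"
    and sigma_diff: "\<forall>l\<in>{1..L}. \<forall>s. \<sigma> l differentiable (at s)"
    and b12: "\<forall>l\<in>{1..L}. \<forall>S\<ge>0. 0 \<le> b1 l S \<and> 0 \<le> b2 l S \<and>
            (\<forall>s. \<bar>s\<bar> \<le> S \<longrightarrow> \<bar>\<sigma> l s\<bar> \<le> b1 l S * \<bar>s\<bar> \<and> \<bar>deriv (\<sigma> l) s\<bar> \<le> b2 l S)"
    and e_nonneg: "\<forall>v y. 0 \<le> e v y"
    and e_diff: "\<forall>v y. (\<lambda>u. e u y) differentiable (at v)"
    and b3: "\<forall>S\<ge>0. 0 \<le> b3 S \<and>
          (\<forall>v y. e v y \<le> S \<longrightarrow>
             (\<forall>k. \<bar>frechet_derivative (\<lambda>u. e u y) (at v) (axis k 1)\<bar> \<le> b3 S))"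
    and lam: "lam > 0"
    and p: "1 \<le> p"
    and B: "0 \<le> B"
begin

definition C where "C = B / lam"

lemma C_nonneg: "0 \<le> C" using B lam by (simp add: C_def)

lemma p0: "p > 0" using p by simp

definition good :: "(nat \<Rightarrow> nat) \<Rightarrow> (nat \<Rightarrow> nat \<Rightarrow> nat \<Rightarrow> real) \<Rightarrow> bool" where
  "good d W \<longleftrightarrow> (\<forall>l\<in>{1..L}. (\<Sum>j<d l. pn p (d (l-1)) (\<lambda>i. W l i j)) \<le> C)"

definition R0 where "R0 = (\<Sum>(x,y)\<in>D. \<Sum>i<CARD('i). \<bar>x $ (fin_enum i :: 'i)\<bar>)"

primrec R :: "nat \<Rightarrow> real" where
  "R 0 = R0"
| "R (Suc m) = \<bar>b1 (Suc m) (R m * C)\<bar> * R m * C"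

lemma R_nonneg: "0 \<le> R m"
proof (induction m)
  case 0 then show ?case by (auto simp: R0_def split_def intro!: sum_nonneg)
next
  case (Suc m) then show ?case using C_nonneg by simp
qed

lemma good_col: "good d W \<Longrightarrow> l \<in> {1..L} \<Longrightarrow> j < d l \<Longrightarrow> pn p (d (l-1)) (\<lambda>i. W l i j) \<le> C"
proof -
  assume a: "good d W" "l \<in> {1..L}" "j < d l"
  have "(\<Sum>j<d l. pn p (d (l-1)) (\<lambda>i. W l i j)) \<le> C" using a by (auto simp: good_def)
  moreover have "pn p (d (l-1)) (\<lambda>i. W l i j) \<le> (\<Sum>j<d l. pn p (d (l-1)) (\<lambda>i. W l i j))"
    by (rule member_le_sum) (use a in \<open>auto simp: pn_nonneg\<close>)
  ultimately show ?thesis by simp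
qed

lemma good_entry: "good d W \<Longrightarrow> l \<in> {1..L} \<Longrightarrow> j < d l \<Longrightarrow> i < d (l-1) \<Longrightarrow> \<bar>W l i j\<bar> \<le> C"
  using pn_ge[OF p0, of i "d (l-1)" "\<lambda>i. W l i j"] good_col by force

lemma x0_bound: "(x,y) \<in> D \<Longrightarrow> (\<Sum>i<CARD('i). \<bar>x $ (fin_enum i :: 'i)\<bar>) \<le> R0"
  unfolding R0_def
  using member_le_sum[of "(x,y)" D "\<lambda>(x,y). \<Sum>i<CARD('i). \<bar>x $ (fin_enum i :: 'i)\<bar>"] D
  by (auto intro!: sum_nonneg)

lemma fwd:
  assumes g: "good d W" and d0: "d 0 = CARD('i)" and xy: "(x,y) \<in> D" and m: "m \<le> L"
  shows "\<bar>\<Sum>j<d m. layer \<sigma> d W x m j * u j\<bar> \<le> R m * pn p (d m) u"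
  using m
proof (induction m arbitrary: u)
  case 0
  have "\<bar>\<Sum>j<d 0. layer \<sigma> d W x 0 j * u j\<bar> \<le> (\<Sum>j<d 0. \<bar>layer \<sigma> d W x 0 j\<bar> * \<bar>u j\<bar>)"
    by (rule order_trans[OF sum_abs]) (simp add: abs_mult)
  also have "\<dots> \<le> (\<Sum>j<d 0. \<bar>layer \<sigma> d W x 0 j\<bar> * pn p (d 0) u)"
    by (rule sum_mono) (auto intro!: mult_left_mono pn_ge[OF p0])
  also have "\<dots> = (\<Sum>i<CARD('i). \<bar>x $ (fin_enum i :: 'i)\<bar>) * pn p (d 0) u"
    by (simp add: d0 sum_distrib_right)
  also have "\<dots> \<le> R0 * pn p (d 0) u"
    by (rule mult_right_mono[OF x0_bound[OF xy] pn_nonneg])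
  finally show ?case by simp
next
  case (Suc m)
  let ?S = "R m * C"
  have S0: "0 \<le> ?S" using R_nonneg C_nonneg by simp
  have lm: "Suc m \<in> {1..L}" using Suc by simp
  have zb: "\<bar>\<Sum>i<d m. layer \<sigma> d W x m i * W (Suc m) i j\<bar> \<le> R m * pn p (d m) (\<lambda>i. W (Suc m) i j)" for j
    using Suc by simp
  have xb: "\<bar>layer \<sigma> d W x (Suc m) j\<bar> \<le> \<bar>b1 (Suc m) ?S\<bar> * (R m * pn p (d m) (\<lambda>i. W (Suc m) i j))"
    if j: "j < d (Suc m)" for j
  proof -
    have cb: "pn p (d m) (\<lambda>i. W (Suc m) i j) \<le> C" using good_col[OF g lm j] by simp
    have z1: "\<bar>\<Sum>i<d m. layer \<sigma> d W x m i * W (Suc m) i j\<bar> \<le> ?S"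
      by (rule order_trans[OF zb]) (rule mult_left_mono[OF cb R_nonneg])
    have "\<bar>layer \<sigma> d W x (Suc m) j\<bar> \<le> b1 (Suc m) ?S * \<bar>\<Sum>i<d m. layer \<sigma> d W x m i * W (Suc m) i j\<bar>"
      unfolding layer_Suc_z using b12 lm S0 z1 by blast
    also have "\<dots> \<le> \<bar>b1 (Suc m) ?S\<bar> * (R m * pn p (d m) (\<lambda>i. W (Suc m) i j))"
      by (rule mult_mono[OF abs_ge_self zb abs_ge_zero abs_ge_zero])
    finally show ?thesis .
  qed
  have "\<bar>\<Sum>j<d (Suc m). layer \<sigma> d W x (Suc m) j * u j\<bar> \<le> (\<Sum>j<d (Suc m). \<bar>layer \<sigma> d W x (Suc m) j\<bar> * \<bar>u j\<bar>)"
    by (rule order_trans[OF sum_abs]) (simp add: abs_mult)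
  also have "\<dots> \<le> (\<Sum>j<d (Suc m). (\<bar>b1 (Suc m) ?S\<bar> * (R m * pn p (d m) (\<lambda>i. W (Suc m) i j))) * pn p (d (Suc m)) u)"
    apply (rule sum_mono)
    apply (rule mult_mono[OF xb pn_ge[OF p0]])
    apply (auto simp del: layer.simps intro!: mult_nonneg_nonneg R_nonneg pn_nonneg)
    done
  also have "\<dots> = \<bar>b1 (Suc m) ?S\<bar> * R m * pn p (d (Suc m)) u * (\<Sum>j<d (Suc m). pn p (d (Suc m - 1)) (\<lambda>i. W (Suc m) i j))"
    by (simp add: sum_distrib_left sum_distrib_right mult_ac)
  also have "\<dots> \<le> \<bar>b1 (Suc m) ?S\<bar> * R m * pn p (d (Suc m)) u * C"
  proof -
    have "(\<Sum>j<d (Suc m). pn p (d (Suc m - 1)) (\<lambda>i. W (Suc m) i j)) \<le> C"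
      using g lm unfolding good_def by blast
    then show ?thesis
      by (intro mult_left_mono) (auto intro!: mult_nonneg_nonneg R_nonneg pn_nonneg)
  qed
  finally show ?case by (simp add: mult_ac)
qed


lemma zbound:
  assumes g: "good d W" and d0: "d 0 = CARD('i)" and xy: "(x,y) \<in> D" and m: "Suc m \<le> L" and j: "j < d (Suc m)"
  shows "\<bar>\<Sum>i<d m. layer \<sigma> d W x m i * W (Suc m) i j\<bar> \<le> R m * pn p (d m) (\<lambda>i. W (Suc m) i j)"
    and "\<bar>\<Sum>i<d m. layer \<sigma> d W x m i * W (Suc m) i j\<bar> \<le> R m * C"
proof -
  show 1: "\<bar>\<Sum>i<d m. layer \<sigma> d W x m i * W (Suc m) i j\<bar> \<le> R m * pn p (d m) (\<lambda>i. W (Suc m) i j)"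
    using fwd[OF g d0 xy, of m "\<lambda>i. W (Suc m) i j"] m by simp
  have "pn p (d m) (\<lambda>i. W (Suc m) i j) \<le> C" using good_col[OF g _ j] m by simp
  then show "\<bar>\<Sum>i<d m. layer \<sigma> d W x m i * W (Suc m) i j\<bar> \<le> R m * C"
    using 1 R_nonneg by (meson mult_left_mono order_trans)
qed

lemma sigma_lip:
  assumes l: "l \<in> {1..L}" and S: "0 \<le> S" and a: "\<bar>a\<bar> \<le> S" and b: "\<bar>b\<bar> \<le> S"
  shows "\<bar>\<sigma> l a - \<sigma> l b\<bar> \<le> b2 l S * \<bar>a - b\<bar>"
proof -
  have "norm (\<sigma> l a - \<sigma> l b) \<le> b2 l S * norm (a - b)"
  proof (rule field_differentiable_bound[of "{-S..S}"])
    show "convex {-S..S}" by (rule convex_real_interval)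
    show "(\<sigma> l has_field_derivative deriv (\<sigma> l) z) (at z within {-S..S})" for z
      using sigma_diff l DERIV_deriv_iff_real_differentiable has_field_derivative_at_within by blast
    show "norm (deriv (\<sigma> l) z) \<le> b2 l S" if "z \<in> {-S..S}" for z
      using b12 l S that by (auto simp: abs_le_iff)
    show "a \<in> {-S..S}" "b \<in> {-S..S}" using a b by (auto simp: abs_le_iff)
  qed
  then show ?thesis by simp
qed


lemma good_Wt:
  assumes g: "good d W" and t: "0 \<le> t" "t \<le> 1"
  shows "good d (Wt W l j t)"
  unfolding good_def
proof
  fix l' assume l': "l' \<in> {1..L}"
  have "(\<Sum>k<d l'. pn p (d (l'-1)) (\<lambda>i. Wt W l j t l' i k)) \<le> (\<Sum>k<d l'. pn p (d (l'-1)) (\<lambda>i. W l' i k))"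
    by (rule sum_mono) (simp add: pn_Wt[OF p0 t] pn_nonneg t)
  also have "\<dots> \<le> C" using g l' unfolding good_def by blast
  finally show "(\<Sum>k<d l'. pn p (d (l'-1)) (\<lambda>i. Wt W l j t l' i k)) \<le> C" .
qed

definition Bm :: "nat \<Rightarrow> real" where
  "Bm M = 1 + (\<Sum>m\<in>{1..L}. b2 m (R (m-1) * C)) * (1 + real M * C)"

lemma b2_nonneg: "m \<in> {1..L} \<Longrightarrow> 0 \<le> b2 m (R (m-1) * C)"
  using b12 R_nonneg C_nonneg by simp

lemma Bm_props:
  assumes "m \<in> {1..L}"
  shows "1 \<le> Bm M" "b2 m (R (m-1) * C) \<le> Bm M" "b2 m (R (m-1) * C) * (real M * C) \<le> Bm M"
proof -
  let ?s = "(\<Sum>m\<in>{1..L}. b2 m (R (m-1) * C))"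
  have s0: "0 \<le> ?s" by (rule sum_nonneg) (rule b2_nonneg)
  have bs: "b2 m (R (m-1) * C) \<le> ?s"
    by (rule member_le_sum) (use assms b2_nonneg in auto)
  have MC: "0 \<le> real M * C" using C_nonneg by simp
  have "0 \<le> ?s * (1 + real M * C)" using s0 MC by (intro mult_nonneg_nonneg) auto
  then show "1 \<le> Bm M" unfolding Bm_def by linarith
  have sMC: "0 \<le> ?s * (real M * C)" by (rule mult_nonneg_nonneg[OF s0 MC])
  have e1: "?s * (1 + real M*C) = ?s + ?s*(real M*C)" by (simp add: distrib_left)
  have "?s \<le> ?s * (1 + real M * C)" using sMC e1 by linarith
  then show "b2 m (R (m-1) * C) \<le> Bm M" unfolding Bm_def using bs by linarith
  have "b2 m (R (m-1) * C) * (real M * C) \<le> ?s * (real M * C)" by (rule mult_right_mono[OF bs MC])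
  also have "\<dots> \<le> ?s * (1 + real M * C)" using s0 e1 by linarith
  finally show "b2 m (R (m-1) * C) * (real M * C) \<le> Bm M" unfolding Bm_def by linarith
qed

lemma bwd:
  assumes g: "good d W" and d0: "d 0 = CARD('i)" and xy: "(x,y) \<in> D"
    and t: "0 \<le> t" "t \<le> 1" and j: "j < d (Suc l0)"
    and hM: "\<forall>m. Suc l0 < m \<longrightarrow> m \<le> L \<longrightarrow> d m \<le> M"
  shows "Suc l0 < m \<Longrightarrow> m \<le> L \<Longrightarrow> k < d m \<Longrightarrow>
     \<bar>layer \<sigma> d (Wt W (Suc l0) j t) x m k - layer \<sigma> d W x m k\<bar>
       \<le> \<bar>layer \<sigma> d (Wt W (Suc l0) j t) x (Suc l0) j - layer \<sigma> d W x (Suc l0) j\<bar>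
          * pn p (d (Suc (Suc l0))) (\<lambda>k. W (Suc (Suc l0)) j k) * Bm M ^ (m - Suc l0)"
proof (induction m arbitrary: k)
  case 0 then show ?case by simp
next
  case (Suc m)
  let ?W' = "Wt W (Suc l0) j t"
  let ?\<Delta> = "\<bar>layer \<sigma> d ?W' x (Suc l0) j - layer \<sigma> d W x (Suc l0) j\<bar>"
  let ?V = "pn p (d (Suc (Suc l0))) (\<lambda>k. W (Suc (Suc l0)) j k)"
  have g': "good d ?W'" by (rule good_Wt[OF g t])
  have W'eq: "?W' (Suc m) = W (Suc m)" using Suc by (simp add: Wt_other)
  let ?z' = "\<Sum>i<d m. layer \<sigma> d ?W' x m i * W (Suc m) i k"
  let ?z = "\<Sum>i<d m. layer \<sigma> d W x m i * W (Suc m) i k"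
  have lm: "Suc m \<in> {1..L}" using Suc by simp
  have z'b: "\<bar>?z'\<bar> \<le> R m * C" using zbound(2)[OF g' d0 xy _ Suc(4)] Suc(3) W'eq by simp
  have zb: "\<bar>?z\<bar> \<le> R m * C" using zbound(2)[OF g d0 xy _ Suc(4)] Suc(3) by simp
  have S0: "0 \<le> R m * C" using R_nonneg C_nonneg by simp
  have lhs: "\<bar>layer \<sigma> d ?W' x (Suc m) k - layer \<sigma> d W x (Suc m) k\<bar> \<le> b2 (Suc m) (R m * C) * \<bar>?z' - ?z\<bar>"
    unfolding layer_Suc_z W'eq using sigma_lip[OF lm S0 z'b zb] .
  have zd: "?z' - ?z = (\<Sum>i<d m. (layer \<sigma> d ?W' x m i - layer \<sigma> d W x m i) * W (Suc m) i k)"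
    by (simp add: sum_subtractf left_diff_distrib)
  have b2n: "0 \<le> b2 (Suc m) (R m * C)" using b2_nonneg[OF lm] by simp
  show ?case
  proof (cases "m = Suc l0")
    case True
    have "?z' - ?z = (\<Sum>i<d m. if i = j then (layer \<sigma> d ?W' x m j - layer \<sigma> d W x m j) * W (Suc m) j k else 0)"
      unfolding zd apply (rule sum.cong[OF refl]) using True by (auto simp: layer_Wt_at simp del: layer.simps)
    also have "\<dots> = (layer \<sigma> d ?W' x m j - layer \<sigma> d W x m j) * W (Suc m) j k"
      using j True by simp
    finally have "\<bar>?z' - ?z\<bar> = ?\<Delta> * \<bar>W (Suc m) j k\<bar>" using True by (simp add: abs_mult)
    also have "\<dots> \<le> ?\<Delta> * ?V"
      using pn_ge[OF p0, of k "d (Suc m)" "\<lambda>k. W (Suc m) j k"] Suc(4) True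
      by (intro mult_left_mono) auto
    finally have "\<bar>layer \<sigma> d ?W' x (Suc m) k - layer \<sigma> d W x (Suc m) k\<bar> \<le> b2 (Suc m) (R m * C) * (?\<Delta> * ?V)"
      using lhs b2n by (meson mult_left_mono order_trans)
    also have "\<dots> \<le> Bm M * (?\<Delta> * ?V)"
      by (rule mult_right_mono[OF Bm_props(2)[OF lm, simplified]]) (intro mult_nonneg_nonneg abs_ge_zero pn_nonneg)
    finally show ?thesis using True by (simp add: mult_ac)
  next
    case False
    then have ml: "Suc l0 < m" using Suc by simp
    let ?X = "?\<Delta> * ?V * Bm M ^ (m - Suc l0)"
    have "0 \<le> Bm M" using Bm_props(1)[OF lm, of M] by simp
    then have X0: "0 \<le> ?X" by (intro mult_nonneg_nonneg abs_ge_zero pn_nonneg zero_le_power)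
    have "\<bar>?z' - ?z\<bar> \<le> (\<Sum>i<d m. \<bar>layer \<sigma> d ?W' x m i - layer \<sigma> d W x m i\<bar> * \<bar>W (Suc m) i k\<bar>)"
      unfolding zd by (rule order_trans[OF sum_abs]) (simp add: abs_mult)
    also have "\<dots> \<le> (\<Sum>i<d m. ?X * C)"
      apply (rule sum_mono)
      apply (rule mult_mono)
      using Suc ml good_entry[OF g lm] C_nonneg X0 by (auto simp del: layer.simps)
    also have "\<dots> = real (d m) * (?X * C)" by simp
    also have "\<dots> \<le> real M * (?X * C)"
      using hM ml Suc(3) X0 C_nonneg by (intro mult_right_mono) auto
    finally have zz: "\<bar>?z' - ?z\<bar> \<le> real M * (?X * C)" .
    have "\<bar>layer \<sigma> d ?W' x (Suc m) k - layer \<sigma> d W x (Suc m) k\<bar> \<le> b2 (Suc m) (R m * C) * (real M * (?X * C))"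
      using lhs zz b2n by (meson mult_left_mono order_trans)
    also have "\<dots> = (b2 (Suc m) (R m * C) * (real M * C)) * ?X" by (simp add: mult_ac)
    also have "\<dots> \<le> Bm M * ?X" using Bm_props(3)[OF lm, of M] X0 by (intro mult_right_mono) auto
    also have "\<dots> = ?\<Delta> * ?V * Bm M ^ (Suc m - Suc l0)"
    proof -
      have "Suc m - Suc l0 = Suc (m - Suc l0)" using ml by simp
      then show ?thesis by (simp only: power_Suc mult_ac)
    qed
    finally show ?thesis .
  qed
qed


lemma delta_bound:
  assumes g: "good d W" and d0: "d 0 = CARD('i)" and xy: "(x,y) \<in> D"
    and t: "0 \<le> t" "t \<le> 1" and l: "Suc l0 \<le> L" and j: "j < d (Suc l0)"
  shows "\<bar>layer \<sigma> d (Wt W (Suc l0) j t) x (Suc l0) j - layer \<sigma> d W x (Suc l0) j\<bar>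
           \<le> b2 (Suc l0) (R l0 * C) * (t * (R l0 * pn p (d l0) (\<lambda>i. W (Suc l0) i j)))"
proof -
  let ?z = "\<Sum>i<d l0. layer \<sigma> d W x l0 i * W (Suc l0) i j"
  have z1: "\<bar>?z\<bar> \<le> R l0 * pn p (d l0) (\<lambda>i. W (Suc l0) i j)" by (rule zbound(1)[OF g d0 xy l j])
  have z2: "\<bar>?z\<bar> \<le> R l0 * C" by (rule zbound(2)[OF g d0 xy l j])
  have z3: "\<bar>(1-t) * ?z\<bar> \<le> R l0 * C"
  proof -
    have "\<bar>(1-t) * ?z\<bar> = (1-t) * \<bar>?z\<bar>" using t by (simp add: abs_mult)
    also have "\<dots> \<le> 1 * \<bar>?z\<bar>" using t by (intro mult_right_mono) auto
    finally show ?thesis using z2 by simp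
  qed
  have lm: "Suc l0 \<in> {1..L}" using l by simp
  have S0: "0 \<le> R l0 * C" using R_nonneg C_nonneg by simp
  have ab: "\<bar>(1-t) * ?z - ?z\<bar> = t * \<bar>?z\<bar>"
  proof -
    have "(1-t) * ?z - ?z = -(t * ?z)" by (simp add: algebra_simps)
    then show ?thesis using t by (simp add: abs_mult)
  qed
  have "\<bar>layer \<sigma> d (Wt W (Suc l0) j t) x (Suc l0) j - layer \<sigma> d W x (Suc l0) j\<bar>
        = \<bar>\<sigma> (Suc l0) ((1-t) * ?z) - \<sigma> (Suc l0) ?z\<bar>"
    unfolding layer_Wt_at by (simp only: layer_Suc_z refl if_True simp_thms)
  also have "\<dots> \<le> b2 (Suc l0) (R l0 * C) * \<bar>(1-t) * ?z - ?z\<bar>" by (rule sigma_lip[OF lm S0 z3 z2])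
  also have "\<dots> = b2 (Suc l0) (R l0 * C) * (t * \<bar>?z\<bar>)" by (simp only: ab)
  also have "\<dots> \<le> b2 (Suc l0) (R l0 * C) * (t * (R l0 * pn p (d l0) (\<lambda>i. W (Suc l0) i j)))"
    using b2_nonneg[OF lm] z1 t by (intro mult_left_mono) auto
  finally show ?thesis .
qed

lemma out_bound:
  assumes g: "good d W" and d0: "d 0 = CARD('i)" and dL: "d L = CARD('o)" and xy: "(x,y) \<in> D"
    and t: "0 \<le> t" "t \<le> 1" and l: "Suc l0 < L" and j: "j < d (Suc l0)"
    and hM: "\<forall>m. Suc l0 < m \<longrightarrow> m \<le> L \<longrightarrow> d m \<le> M"
  shows "norm (net L \<sigma> d (Wt W (Suc l0) j t) x - (net L \<sigma> d W x :: real^'o))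
     \<le> real CARD('o) * (b2 (Suc l0) (R l0 * C) * (t * (R l0 * pn p (d l0) (\<lambda>i. W (Suc l0) i j)))
          * pn p (d (Suc (Suc l0))) (\<lambda>k. W (Suc (Suc l0)) j k) * Bm M ^ L)"
proof -
  let ?\<Delta> = "\<bar>layer \<sigma> d (Wt W (Suc l0) j t) x (Suc l0) j - layer \<sigma> d W x (Suc l0) j\<bar>"
  let ?V = "pn p (d (Suc (Suc l0))) (\<lambda>k. W (Suc (Suc l0)) j k)"
  let ?Q = "b2 (Suc l0) (R l0 * C) * (t * (R l0 * pn p (d l0) (\<lambda>i. W (Suc l0) i j)))"
  have lm: "Suc l0 \<in> {1..L}" using l by simp
  have B1: "1 \<le> Bm M" using Bm_props(1)[OF lm] .
  have comp: "\<bar>(net L \<sigma> d (Wt W (Suc l0) j t) x - (net L \<sigma> d W x :: real^'o)) $ k\<bar> \<le> ?Q * ?V * Bm M ^ L" for k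
  proof -
    let ?k = "inv_into {..<CARD('o)} (fin_enum :: nat \<Rightarrow> 'o) k"
    have k: "?k < d L" using fin_enum_inv[where 'a='o] dL by simp
    have "\<bar>(net L \<sigma> d (Wt W (Suc l0) j t) x - (net L \<sigma> d W x :: real^'o)) $ k\<bar>
       = \<bar>layer \<sigma> d (Wt W (Suc l0) j t) x L ?k - layer \<sigma> d W x L ?k\<bar>"
      by (simp add: net_def del: layer.simps)
    also have "\<dots> \<le> ?\<Delta> * ?V * Bm M ^ (L - Suc l0)"
      by (rule bwd[OF g d0 xy t j hM l _ k]) simp
    also have "\<dots> \<le> ?\<Delta> * ?V * Bm M ^ L"
      using B1 by (intro mult_left_mono power_increasing mult_nonneg_nonneg pn_nonneg) auto
    also have "\<dots> \<le> ?Q * ?V * Bm M ^ L"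
      using B1 delta_bound[OF g d0 xy t _ j] l
      by (intro mult_right_mono mult_nonneg_nonneg pn_nonneg) auto
    finally show ?thesis .
  qed
  have "norm (net L \<sigma> d (Wt W (Suc l0) j t) x - (net L \<sigma> d W x :: real^'o))
     \<le> (\<Sum>k\<in>UNIV. \<bar>(net L \<sigma> d (Wt W (Suc l0) j t) x - (net L \<sigma> d W x :: real^'o)) $ k\<bar>)"
    by (rule norm_le_l1_cart)
  also have "\<dots> \<le> (\<Sum>k\<in>(UNIV::'o set). ?Q * ?V * Bm M ^ L)" by (rule sum_mono) (rule comp)
  also have "\<dots> = real CARD('o) * (?Q * ?V * Bm M ^ L)" by simp
  finally show ?thesis .
qed


lemma elip:
  assumes S: "0 \<le> S" and ev: "e v y < S"
  shows "\<exists>r>0. \<forall>v'\<in>ball v r. \<bar>e v' y - e v y\<bar> \<le> b3 S * real CARD('o) * norm (v' - v)"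
proof -
  let ?f = "\<lambda>u. e u y"
  have "continuous (at v) ?f"
    using e_diff differentiable_imp_continuous_within[of ?f v UNIV] by simp
  then obtain r where r: "r > 0" "\<And>v'. dist v' v < r \<Longrightarrow> dist (?f v') (?f v) < S - e v y"
    unfolding continuous_at_eps_delta using ev by (meson diff_gt_0_iff_gt)
  have inS: "e u y \<le> S" if "u \<in> ball v r" for u
    using r(2)[of u] that by (auto simp: dist_commute dist_real_def)
  have "\<bar>e v' y - e v y\<bar> \<le> b3 S * real CARD('o) * norm (v' - v)" if v': "v' \<in> ball v r" for v'
  proof -
    have "norm (?f v' - ?f v) \<le> (b3 S * real CARD('o)) * norm (v' - v)"
    proof (rule differentiable_bound[of "ball v r" ?f "\<lambda>u. frechet_derivative ?f (at u)"])
      show "convex (ball v r)" by (rule convex_ball)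
      fix u assume u: "u \<in> ball v r"
      have hd: "(?f has_derivative frechet_derivative ?f (at u)) (at u)"
        using e_diff frechet_derivative_works by blast
      then show "(?f has_derivative frechet_derivative ?f (at u)) (at u within ball v r)"
        by (rule has_derivative_at_withinI)
      have lin: "linear (frechet_derivative ?f (at u))" by (rule has_derivative_linear[OF hd])
      have bk: "\<bar>frechet_derivative ?f (at u) (axis k 1)\<bar> \<le> b3 S" for k
        using b3 S inS[OF u] by blast
      show "onorm (frechet_derivative ?f (at u)) \<le> b3 S * real CARD('o)"
      proof (rule onorm_le)
        fix h :: "real^'o"
        have "frechet_derivative ?f (at u) h = frechet_derivative ?f (at u) (\<Sum>k\<in>UNIV. h $ k *\<^sub>R axis k 1)"
          using basis_expansion[of h] by (simp add: scalar_mult_eq_scaleR)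
        also have "\<dots> = (\<Sum>k\<in>UNIV. h $ k * frechet_derivative ?f (at u) (axis k 1))"
          using lin by (simp add: linear_sum linear_scale)
        finally have eq: "frechet_derivative ?f (at u) h = (\<Sum>k\<in>UNIV. h $ k * frechet_derivative ?f (at u) (axis k 1))" .
        have "\<bar>\<Sum>k\<in>UNIV. h $ k * frechet_derivative ?f (at u) (axis k 1)\<bar> \<le> (\<Sum>k\<in>(UNIV::'o set). norm h * b3 S)"
          by (rule order_trans[OF sum_abs], rule sum_mono)
             (auto simp: abs_mult intro!: mult_mono component_le_norm_cart bk)
        then show "norm (frechet_derivative ?f (at u) h) \<le> b3 S * real CARD('o) * norm h"
          by (simp add: eq mult_ac)
      qed
    next
      show "v' \<in> ball v r" by (rule v')
      show "v \<in> ball v r" using r by simp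
    qed
    then show ?thesis by simp
  qed
  then show ?thesis using r by blast
qed


definition valid :: "(nat \<Rightarrow> nat) \<Rightarrow> (nat \<Rightarrow> nat \<Rightarrow> nat \<Rightarrow> real) \<Rightarrow> bool" where
  "valid d W \<longleftrightarrow> d 0 = CARD('i) \<and> d L = CARD('o) \<and>
            local_min L d (E_err L \<sigma> e D lam p d) W \<and>
            E_err L \<sigma> e D lam p d W \<le> B \<and> proper L d W"

definition Se where "Se = real (card D) * B + 1"

definition K :: "nat \<Rightarrow> nat \<Rightarrow> real" where
  "K M l0 = b3 Se * real CARD('o) * real CARD('o) * b2 (Suc l0) (R l0 * C) * R l0 * Bm M ^ L"

lemma err_nonneg: "0 \<le> (\<Sum>(x, y)\<in>D. e (net L \<sigma> d W x) y) / real (card D)"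
  using e_nonneg by (auto intro!: divide_nonneg_nonneg sum_nonneg split: prod.split)

lemma valid_good: assumes "valid d W" shows "good d W"
proof -
  let ?T = "\<lambda>l'. (\<Sum>k<d l'. pn p (d (l'-1)) (\<lambda>i. W l' i k))"
  have "Omega_in L d W lam p \<le> B"
    using assms err_nonneg[of d W] unfolding valid_def E_err_def by linarith
  then have "lam * (\<Sum>l'\<in>{1..L}. ?T l') \<le> B" by (simp add: Omega_pn)
  then have tot: "(\<Sum>l'\<in>{1..L}. ?T l') \<le> C" using lam unfolding C_def by (simp add: field_simps mult.commute)
  show ?thesis unfolding good_def
  proof
    fix l assume l: "l \<in> {1..L}"
    have "?T l \<le> (\<Sum>l'\<in>{1..L}. ?T l')"
      by (rule member_le_sum) (use l in \<open>auto intro!: sum_nonneg simp: pn_nonneg\<close>)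
    then show "?T l \<le> C" using tot by simp
  qed
qed

lemma valid_eval: assumes "valid d W" "(x,y) \<in> D" shows "e (net L \<sigma> d W x) y < Se"
proof -
  have cD: "card D > 0" using assms(2) D card_gt_0_iff by blast
  let ?S = "(\<Sum>(x, y)\<in>D. e (net L \<sigma> d W x) y)"
  have "?S / real (card D) \<le> B"
    using assms(1) Omega_pn[of L d W lam p] lam unfolding valid_def E_err_def
    by (smt (verit) mult_nonneg_nonneg pn_nonneg sum_nonneg)
  then have "?S \<le> real (card D) * B" using cD by (simp add: field_simps)
  moreover have "e (net L \<sigma> d W x) y \<le> ?S"
    using member_le_sum[of "(x,y)" D "\<lambda>(x,y). e (net L \<sigma> d W x) y"] assms(2) D e_nonneg by auto
  ultimately show ?thesis unfolding Se_def by simp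
qed


lemma Se_nonneg: "0 \<le> Se" using B by (simp add: Se_def)

lemma stationarity:
  assumes v: "valid d W" and l: "Suc l0 < L"
    and hM: "\<forall>m. Suc l0 < m \<longrightarrow> m \<le> L \<longrightarrow> d m \<le> M" and j: "j < d (Suc l0)"
  shows "lam \<le> K M l0 * pn p (d (Suc (Suc l0))) (\<lambda>k. W (Suc (Suc l0)) j k)"
proof -
  have g: "good d W" by (rule valid_good[OF v])
  have d0: "d 0 = CARD('i)" and dL: "d L = CARD('o)" and lmin: "local_min L d (E_err L \<sigma> e D lam p d) W"
    and pr: "proper L d W"
    using v unfolding valid_def by auto
  let ?cj = "pn p (d l0) (\<lambda>i. W (Suc l0) i j)"
  let ?V = "pn p (d (Suc (Suc l0))) (\<lambda>k. W (Suc (Suc l0)) j k)"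
  let ?out = "\<lambda>V x. (net L \<sigma> d V x :: real^'o)"
  have lm: "Suc l0 \<in> {1..L}" using l by simp
  have cj: "?cj > 0"
  proof -
    have "Suc l0 \<in> {1..L-1}" using l by simp
    then obtain i where i: "i < d l0" "W (Suc l0) i j \<noteq> 0" using pr j unfolding proper_def by fastforce
    have "\<bar>W (Suc l0) i j\<bar> \<le> ?cj" using pn_ge[OF p0 i(1), of "\<lambda>i. W (Suc l0) i j"] by simp
    then show ?thesis using i by linarith
  qed
  obtain \<epsilon> where eps: "\<epsilon> > 0" and epsmin: "\<And>W'. (\<forall>l\<in>{1..L}. \<forall>i<d (l - 1). \<forall>j<d l. \<bar>W' l i j - W l i j\<bar> < \<epsilon>)
                  \<Longrightarrow> E_err L \<sigma> e D lam p d W \<le> E_err L \<sigma> e D lam p d W'"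
    using lmin unfolding local_min_def by blast
  have "\<forall>xy\<in>D. \<exists>r>0. \<forall>v'\<in>ball (?out W (fst xy)) r.
           \<bar>e v' (snd xy) - e (?out W (fst xy)) (snd xy)\<bar> \<le> b3 Se * real CARD('o) * norm (v' - ?out W (fst xy))"
    using elip[OF Se_nonneg valid_eval[OF v]] by auto
  then obtain rf where rf: "\<And>xy. xy \<in> D \<Longrightarrow> rf xy > 0"
    "\<And>xy v'. xy \<in> D \<Longrightarrow> v' \<in> ball (?out W (fst xy)) (rf xy) \<Longrightarrow>
        \<bar>e v' (snd xy) - e (?out W (fst xy)) (snd xy)\<bar> \<le> b3 Se * real CARD('o) * norm (v' - ?out W (fst xy))"
    by metis
  let ?A = "real CARD('o) * (b2 (Suc l0) (R l0 * C) * (R l0 * ?cj) * ?V * Bm M ^ L)"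
  have A0: "0 \<le> ?A"
    using b2_nonneg[OF lm] Bm_props(1)[OF lm, of M]
    by (intro mult_nonneg_nonneg R_nonneg pn_nonneg of_nat_0_le_iff zero_le_power) auto
  have ev_lt: "eventually (\<lambda>t. t * a < r) (at_right (0::real))" if "r > 0" "0 \<le> a" for r a
    unfolding eventually_at_right_field
  proof (intro exI[of _ "r / (a + 1)"] conjI allI impI)
    show "0 < r / (a + 1)" using that by simp
    fix t :: real assume t: "0 < t" "t < r / (a + 1)"
    have "t * a \<le> t * (a + 1)" using t by simp
    also have "\<dots> < r" using t that by (simp add: field_simps)
    finally show "t * a < r" .
  qed
  have "eventually (\<lambda>t. t * 1 < 1 \<and> t * C < \<epsilon> \<and> (\<forall>xy\<in>D. t * ?A < rf xy)) (at_right (0::real))"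
    using ev_lt[of 1 1] ev_lt[OF eps C_nonneg] rf(1) A0 D
    by (intro eventually_conj eventually_ball_finite) (auto intro: ev_lt)
  then obtain b where b: "b > 0" "\<And>t. 0 < t \<Longrightarrow> t < b \<Longrightarrow> t * 1 < 1 \<and> t * C < \<epsilon> \<and> (\<forall>xy\<in>D. t * ?A < rf xy)"
    unfolding eventually_at_right_field by auto
  define t where "t = b / 2"
  have t0: "0 < t" and tb: "t < b" using b by (auto simp: t_def)
  have t1: "t < 1" and tC: "t * C < \<epsilon>" and tA: "\<And>xy. xy \<in> D \<Longrightarrow> t * ?A < rf xy"
    using b(2)[OF t0 tb] by auto
  let ?W' = "Wt W (Suc l0) j t"
  have close: "\<forall>l\<in>{1..L}. \<forall>i<d (l - 1). \<forall>k<d l. \<bar>?W' l i k - W l i k\<bar> < \<epsilon>"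
  proof (intro ballI allI impI)
    fix l' i k assume l': "l' \<in> {1..L}" and i: "i < d (l' - 1)" and k: "k < d l'"
    show "\<bar>?W' l' i k - W l' i k\<bar> < \<epsilon>"
    proof (cases "l' = Suc l0 \<and> k = j")
      case True
      have "\<bar>?W' l' i k - W l' i k\<bar> = t * \<bar>W l' i k\<bar>"
        using True t0 by (simp add: Wt_def algebra_simps abs_mult)
      also have "\<dots> \<le> t * C" using good_entry[OF g l' k i] t0 by simp
      finally show ?thesis using tC by simp
    next
      case False then show ?thesis using eps by (auto simp: Wt_def)
    qed
  qed
  have Eineq: "E_err L \<sigma> e D lam p d W \<le> E_err L \<sigma> e D lam p d ?W'" by (rule epsmin[OF close])
  have Om: "Omega_in L d ?W' lam p = Omega_in L d W lam p - lam * (t * ?cj)"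
    using Omega_Wt[of p t "Suc l0" L j d W lam] p0 t0 t1 lm j by simp
  have diffb: "\<forall>xy\<in>D. (\<lambda>(x,y). e (?out ?W' x) y) xy - (\<lambda>(x,y). e (?out W x) y) xy \<le> b3 Se * real CARD('o) * (t * ?A)"
  proof
    fix xy assume xy: "xy \<in> D"
    obtain x y where xy': "xy = (x,y)" by force
    have xyD: "(x,y) \<in> D" using xy xy' by simp
    have nb: "norm (?out ?W' x - ?out W x) \<le> t * ?A"
      using out_bound[OF g d0 dL xyD _ _ l j hM, of t] t0 t1 by (simp add: mult_ac)
    have inb: "?out ?W' x \<in> ball (?out W x) (rf (x,y))"
      using nb tA[OF xyD] by (simp add: dist_norm norm_minus_commute)
    have "e (?out ?W' x) y - e (?out W x) y \<le> b3 Se * real CARD('o) * norm (?out ?W' x - ?out W x)"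
      using rf(2)[of "(x,y)" "?out ?W' x"] xyD inb by simp
    also have "\<dots> \<le> b3 Se * real CARD('o) * (t * ?A)"
      using b3 Se_nonneg nb by (intro mult_left_mono) auto
    finally show "(\<lambda>(x,y). e (?out ?W' x) y) xy - (\<lambda>(x,y). e (?out W x) y) xy \<le> b3 Se * real CARD('o) * (t * ?A)"
      using xy' by simp
  qed
  have b3S: "0 \<le> b3 Se" using b3 Se_nonneg by blast
  have tA0: "0 \<le> t * ?A" using t0 A0 by simp
  have c0: "0 \<le> b3 Se * real CARD('o) * (t * ?A)"
    by (rule mult_nonneg_nonneg[OF mult_nonneg_nonneg[OF b3S of_nat_0_le_iff] tA0])
  have errd: "(\<Sum>(x, y)\<in>D. e (?out ?W' x) y) / real (card D) - (\<Sum>(x, y)\<in>D. e (?out W x) y) / real (card D)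
      \<le> b3 Se * real CARD('o) * (t * ?A)"
    by (rule avg_diff[OF D diffb c0])
  have "lam * (t * ?cj) \<le> b3 Se * real CARD('o) * (t * ?A)"
    using Eineq Om errd unfolding E_err_def by linarith
  also have "\<dots> = (t * ?cj) * (K M l0 * ?V)" by (simp add: K_def mult_ac)
  finally have "(t * ?cj) * lam \<le> (t * ?cj) * (K M l0 * ?V)" by (simp add: mult_ac)
  then show ?thesis using t0 cj by (simp add: mult_le_cancel_left_pos)
qed


lemma nat_le_ceil: "real n \<le> x \<Longrightarrow> n \<le> nat \<lceil>x\<rceil>"
  by (metis ceiling_mono ceiling_of_nat nat_int nat_mono)

lemma layer_step:
  assumes l: "Suc l0 < L" and hM: "\<forall>d W. valid d W \<longrightarrow> (\<forall>m. Suc l0 < m \<longrightarrow> m \<le> L \<longrightarrow> d m \<le> M)"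
  shows "\<exists>M'. \<forall>d W. valid d W \<longrightarrow> d (Suc l0) \<le> M'"
proof -
  let ?Kc = "K M l0"
  let ?q = "(lam / ?Kc) powr p"
  show ?thesis
  proof (intro exI allI impI)
    fix d W assume v: "valid d W"
    show "d (Suc l0) \<le> nat \<lceil>real M * C powr p / ?q\<rceil>"
    proof (cases "d (Suc l0) = 0")
      case True then show ?thesis by simp
    next
      case False
      have g: "good d W" by (rule valid_good[OF v])
      have hMd: "\<forall>m. Suc l0 < m \<longrightarrow> m \<le> L \<longrightarrow> d m \<le> M" using hM v by blast
      let ?V = "\<lambda>j. pn p (d (Suc (Suc l0))) (\<lambda>k. W (Suc (Suc l0)) j k)"
      have st: "lam \<le> ?Kc * ?V j" if "j < d (Suc l0)" for j
        by (rule stationarity[OF v l hMd that])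
      have Kpos: "?Kc > 0"
      proof (rule ccontr)
        assume "\<not> ?Kc > 0"
        then have "?Kc * ?V 0 \<le> 0" using pn_nonneg by (simp add: mult_nonpos_nonneg)
        then show False using st[of 0] False lam by simp
      qed
      have q0: "?q > 0" using Kpos lam by simp
      have vj: "?q \<le> (\<Sum>k<d (Suc (Suc l0)). \<bar>W (Suc (Suc l0)) j k\<bar> powr p)" if j: "j < d (Suc l0)" for j
      proof -
        have "lam / ?Kc \<le> ?V j" using st[OF j] Kpos by (simp add: pos_divide_le_eq mult.commute)
        then have "?q \<le> ?V j powr p" using Kpos lam p by (intro powr_mono2) auto
        then show ?thesis by (simp add: pn_pow[OF p0])
      qed
      have l2: "Suc (Suc l0) \<in> {1..L}" using l by simp
      have "real (d (Suc l0)) * ?q = (\<Sum>j<d (Suc l0). ?q)" by simp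
      also have "\<dots> \<le> (\<Sum>j<d (Suc l0). \<Sum>k<d (Suc (Suc l0)). \<bar>W (Suc (Suc l0)) j k\<bar> powr p)"
        by (rule sum_mono) (rule vj, simp)
      also have "\<dots> = (\<Sum>k<d (Suc (Suc l0)). \<Sum>j<d (Suc l0). \<bar>W (Suc (Suc l0)) j k\<bar> powr p)"
        by (rule sum.swap)
      also have "\<dots> = (\<Sum>k<d (Suc (Suc l0)). pn p (d (Suc l0)) (\<lambda>j. W (Suc (Suc l0)) j k) powr p)"
        by (simp add: pn_pow[OF p0])
      also have "\<dots> \<le> (\<Sum>k<d (Suc (Suc l0)). C powr p)"
      proof (rule sum_mono)
        fix k assume "k \<in> {..<d (Suc (Suc l0))}"
        then have "pn p (d (Suc l0)) (\<lambda>j. W (Suc (Suc l0)) j k) \<le> C"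
          using good_col[OF g l2, of k] by simp
        then show "pn p (d (Suc l0)) (\<lambda>j. W (Suc (Suc l0)) j k) powr p \<le> C powr p"
          using p by (intro powr_mono2) (auto simp: pn_nonneg)
      qed
      also have "\<dots> = real (d (Suc (Suc l0))) * C powr p" by simp
      also have "\<dots> \<le> real M * C powr p"
        using hMd l by (intro mult_right_mono) auto
      finally have "real (d (Suc l0)) * ?q \<le> real M * C powr p" .
      then have "real (d (Suc l0)) \<le> real M * C powr p / ?q" using q0 by (simp add: pos_le_divide_eq)
      then show ?thesis by (rule nat_le_ceil)
    qed
  qed
qed

lemma all_layers: "n < L \<Longrightarrow> \<exists>M. \<forall>d W. valid d W \<longrightarrow> (\<forall>m. L - n \<le> m \<longrightarrow> m \<le> L \<longrightarrow> d m \<le> M)"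
proof (induction n)
  case 0
  show ?case
    by (intro exI[of _ "CARD('o)"] allI impI) (auto simp: valid_def)
next
  case (Suc n)
  then obtain M where M: "\<forall>d W. valid d W \<longrightarrow> (\<forall>m. L - n \<le> m \<longrightarrow> m \<le> L \<longrightarrow> d m \<le> M)" by auto
  define l0 where "l0 = L - Suc (Suc n)"
  have l0: "Suc l0 = L - Suc n" "Suc l0 < L" using Suc(2) by (auto simp: l0_def)
  have hM: "\<forall>d W. valid d W \<longrightarrow> (\<forall>m. Suc l0 < m \<longrightarrow> m \<le> L \<longrightarrow> d m \<le> M)"
    using M l0 by auto
  obtain M' where M': "\<forall>d W. valid d W \<longrightarrow> d (Suc l0) \<le> M'" using layer_step[OF l0(2) hM] by blast
  show ?case
  proof (intro exI[of _ "max M M'"] allI impI)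
    fix d W m assume v: "valid d W" and m: "L - Suc n \<le> m" "m \<le> L"
    show "d m \<le> max M M'"
    proof (cases "m = Suc l0")
      case True then show ?thesis using M' v by fastforce
    next
      case False
      then have "L - n \<le> m" using m l0 by auto
      then show ?thesis using M v m by fastforce
    qed
  qed
qed

end

theorem lemma2:
  fixes L :: nat
    and \<sigma> :: "nat \<Rightarrow> real \<Rightarrow> real"
    and e :: "real ^ 'o::finite \<Rightarrow> 'y \<Rightarrow> real"
    and D :: "((real ^ 'i::finite) \<times> 'y) set"
    and lam p B :: real
  assumes L: "1 \<le> L"
    and D: "finite D"
    and sigma_diff: "\<forall>l\<in>{1..L}. \<forall>s. \<sigma> l differentiable (at s)"
    and sigma_bounds: "\<exists>b1 b2 :: nat \<Rightarrow> real \<Rightarrow> real.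
          \<forall>l\<in>{1..L}. \<forall>S\<ge>0. 0 \<le> b1 l S \<and> 0 \<le> b2 l S \<and>
            (\<forall>s. \<bar>s\<bar> \<le> S \<longrightarrow> \<bar>\<sigma> l s\<bar> \<le> b1 l S * \<bar>s\<bar> \<and> \<bar>deriv (\<sigma> l) s\<bar> \<le> b2 l S)"
    and e_nonneg: "\<forall>v y. 0 \<le> e v y"
    and e_diff: "\<forall>v y. (\<lambda>u. e u y) differentiable (at v)"
    and e_bound: "\<exists>b3 :: real \<Rightarrow> real. \<forall>S\<ge>0. 0 \<le> b3 S \<and>
          (\<forall>v y. e v y \<le> S \<longrightarrow>
             (\<forall>k. \<bar>frechet_derivative (\<lambda>u. e u y) (at v) (axis k 1)\<bar> \<le> b3 S))"
    and lam: "lam > 0"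
    and p: "1 \<le> p"
  shows "\<exists>M::nat. \<forall>d W. d 0 = CARD('i) \<and> d L = CARD('o) \<and>
            local_min L d (E_err L \<sigma> e D lam p d) W \<and>
            E_err L \<sigma> e D lam p d W \<le> B \<and> proper L d W
          \<longrightarrow> (\<forall>l\<in>{1..L-1}. d l \<le> M)"
proof -
  obtain b1 b2 :: "nat \<Rightarrow> real \<Rightarrow> real" where b12:
    "\<forall>l\<in>{1..L}. \<forall>S\<ge>0. 0 \<le> b1 l S \<and> 0 \<le> b2 l S \<and>
            (\<forall>s. \<bar>s\<bar> \<le> S \<longrightarrow> \<bar>\<sigma> l s\<bar> \<le> b1 l S * \<bar>s\<bar> \<and> \<bar>deriv (\<sigma> l) s\<bar> \<le> b2 l S)"
    using sigma_bounds by blast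
  obtain b3 :: "real \<Rightarrow> real" where b3: "\<forall>S\<ge>0. 0 \<le> b3 S \<and>
          (\<forall>v y. e v y \<le> S \<longrightarrow>
             (\<forall>k. \<bar>frechet_derivative (\<lambda>u. e u y) (at v) (axis k 1)\<bar> \<le> b3 S))"
    using e_bound by blast
  show ?thesis
  proof (cases "B < 0")
    case True
    have "0 \<le> E_err L \<sigma> e D lam p d W" for d W
    proof -
      have "0 \<le> (\<Sum>(x, y)\<in>D. e (net L \<sigma> d W x) y) / real (card D)"
        using e_nonneg by (auto intro!: divide_nonneg_nonneg sum_nonneg split: prod.split)
      moreover have "0 \<le> Omega_in L d W lam p"
        unfolding Omega_pn using lam by (auto intro!: mult_nonneg_nonneg sum_nonneg pn_nonneg)
      ultimately show ?thesis unfolding E_err_def by simp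
    qed
    then show ?thesis using True by (meson not_le order_trans)
  next
    case False
    interpret N: NN L \<sigma> e D lam p B b1 b2 b3
      by unfold_locales (use L D sigma_diff b12 e_nonneg e_diff b3 lam p False in auto)
    obtain M where M: "\<forall>d W. N.valid d W \<longrightarrow> (\<forall>m. L - (L - 1) \<le> m \<longrightarrow> m \<le> L \<longrightarrow> d m \<le> M)"
      using N.all_layers[of "L - 1"] L by auto
    show ?thesis
    proof (intro exI[of _ M] allI impI ballI)
      fix d W l
      assume v: "d 0 = CARD('i) \<and> d L = CARD('o) \<and>
            local_min L d (E_err L \<sigma> e D lam p d) W \<and>
            E_err L \<sigma> e D lam p d W \<le> B \<and> proper L d W" and l: "l \<in> {1..L-1}"
      have "N.valid d W" using v unfolding N.valid_def by blast
      then show "d l \<le> M" using M l L by auto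
    qed
  qed
qed

end
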